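(* Let $1\le r<m$ and $0<\varepsilon<1$. (a) For every $g\in[1,m-r]$ and every $\xi\in\Gamma^g$, $\mu(\xi)\le\mu(\xi_*^g)$, where $\xi_*^g=(0^{r-1},1^{m-r-g},0,1^g)\in\Gamma^g$. (b) For every left-end path $\xi\in\Gamma$, $\mu(\xi)\le\mu(\xi_* )$ where $\xi_*=(0^r,1^{m-r})$; and for every right-end path in $\Gamma$ with end subpath $\underline\xi$, $\mu(\underline\xi)\le\mu(\xi_* )$. Thus $\xi_*$ is the weakest path of $\Gamma$ and $\xi_*^g$ is the weakest path of $\Gamma^g$.
   Context: $\mu$ is defined on finite binary strings by $\mu(\varnothing)=\varepsilon^{-2}-1$, $\mu(\zeta,0)=(\mu(\zeta)+1)^2-1$, $\mu(\zeta,1)=\mu(\zeta)/2$. Paths: start at node $(m,r)$; a step $0$ moves $(m',r')\to(m'-1,r'-1)$, a step $1$ moves $(m',r')\to(m'-1,r')$; the walk (end subpath) stops as soon as it reaches a node $(g,0)$ with $g\ge1$ (left end) or $(h,h)$ with $h\ge1$ (right end). A left-end path is an end subpath ending at $(g,0)$ followed by $1^g$ (length $m$); a right-end path is an end subpath ending at $(h,h)$ followed by any $h$ bits. $\Gamma$, the set of all such paths, is exactly the set of binary strings of length $m$ with Hamming weight $\ge m-r$. $\Gamma^g\subseteq\Gamma$ is the set of left-end paths whose end subpath ends at $(g,0)$, i.e. strings $(\zeta,0,1^g)$ where $\zeta$ has length $m-g-1$ and exactly $r-1$ zeros. *)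

theory Defs
  imports Complex_Main
begin

(* Binary strings are lists of bool: False = bit 0, True = bit 1.
   (zeta,b) means appending b at the end. *)

fun mu_step :: "real \<Rightarrow> bool \<Rightarrow> real" where
  "mu_step x False = (x + 1)^2 - 1"
| "mu_step x True = x / 2"

definition mu :: "real \<Rightarrow> bool list \<Rightarrow> real" where
  "mu eps xs = foldl mu_step (1 / eps^2 - 1) xs"

definition zeros :: "bool list \<Rightarrow> nat" where
  "zeros xs = length (filter Not xs)"

definition node :: "nat \<Rightarrow> nat \<Rightarrow> bool list \<Rightarrow> int \<times> int" where
  "node m r xs = (int m - int (length xs), int r - int (zeros xs))"

definition is_end_node :: "int \<times> int \<Rightarrow> bool" where
  "is_end_node p \<longleftrightarrow> (fst p \<ge> 1 \<and> snd p = 0) \<or> (fst p \<ge> 1 \<and> fst p = snd p)"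

definition end_subpath :: "nat \<Rightarrow> nat \<Rightarrow> bool list \<Rightarrow> bool" where
  "end_subpath m r xs \<longleftrightarrow> is_end_node (node m r xs)
     \<and> (\<forall>k < length xs. \<not> is_end_node (node m r (take k xs)))"

definition left_end_path :: "nat \<Rightarrow> nat \<Rightarrow> bool list \<Rightarrow> bool" where
  "left_end_path m r p \<longleftrightarrow> (\<exists>xs g. end_subpath m r xs \<and> g \<ge> 1 \<and> node m r xs = (int g, 0)
      \<and> p = xs @ replicate g True)"

definition right_end_path :: "nat \<Rightarrow> nat \<Rightarrow> bool list \<Rightarrow> bool" where
  "right_end_path m r p \<longleftrightarrow> (\<exists>xs ys h. end_subpath m r xs \<and> h \<ge> 1 \<and> node m r xs = (int h, int h)
      \<and> length ys = h \<and> p = xs @ ys)"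

definition Gamma_g :: "nat \<Rightarrow> nat \<Rightarrow> nat \<Rightarrow> bool list set" where
  "Gamma_g m r g = {xs @ replicate g True | xs. end_subpath m r xs \<and> node m r xs = (int g, 0)}"

definition xi_star_g :: "nat \<Rightarrow> nat \<Rightarrow> nat \<Rightarrow> bool list" where
  "xi_star_g m r g = replicate (r - 1) False @ replicate (m - r - g) True @ [False] @ replicate g True"

definition xi_star :: "nat \<Rightarrow> nat \<Rightarrow> bool list" where
  "xi_star m r = replicate r False @ replicate (m - r) True"

end

theory Submission
  imports Defs
begin

lemma foldl_nonneg: "0 \<le> x \<Longrightarrow> 0 \<le> foldl mu_step x xs"
proof (induction xs arbitrary: x)
  case (Cons b xs)
  have "0 \<le> mu_step x b" using Cons.prems by (cases b) auto
  then show ?case using Cons.IH by simp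
qed simp

lemma step_mono: "0 \<le> x \<Longrightarrow> x \<le> y \<Longrightarrow> mu_step x b \<le> mu_step y b"
proof (cases b)
  case False
  assume "0 \<le> x" "x \<le> y"
  then have "(x+1)^2 \<le> (y+1)^2" by (intro power_mono) auto
  then show ?thesis using False by simp
qed auto

lemma foldl_mono: "0 \<le> x \<Longrightarrow> x \<le> y \<Longrightarrow> foldl mu_step x xs \<le> foldl mu_step y xs"
proof (induction xs arbitrary: x y)
  case (Cons b xs)
  have "0 \<le> mu_step x b" using Cons.prems by (cases b) auto
  moreover have "mu_step x b \<le> mu_step y b" using Cons.prems step_mono by blast
  ultimately show ?case using Cons.IH by simp
qed simp

lemma foldl_ones: "foldl mu_step y (replicate n True) = y / 2^n"
  by (induction n arbitrary: y) (auto simp: replicate_app_Cons_same)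

lemma foldl_zeros_ge: "0 \<le> y \<Longrightarrow> y \<le> foldl mu_step y (replicate n False)"
proof (induction n arbitrary: y)
  case (Suc n)
  have "y \<le> (y+1)^2 - 1" using Suc.prems by (simp add: power2_eq_square algebra_simps)
  moreover have "0 \<le> (y+1)^2 - 1" using Suc.prems by (simp add: power2_eq_square algebra_simps)
  ultimately show ?case using Suc.IH[of "(y+1)^2 - 1"] by simp
qed simp

definition srt :: "bool list \<Rightarrow> bool list" where
  "srt xs = replicate (zeros xs) False @ replicate (length xs - zeros xs) True"

lemma zeros_le: "zeros xs \<le> length xs"
  unfolding zeros_def by (rule length_filter_le)

lemma swap_ineq:
  assumes "0 \<le> y"
  shows "mu_step (y / 2^n) False \<le> (mu_step y False) / 2^n"
proof -
  have p: "(1::real) \<le> 2^n" by simp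
  have "y*y*2^n \<le> y*y*(2^n*2^n)"
    using p assms by (intro mult_left_mono) auto
  then show ?thesis by (simp add: power2_eq_square field_simps)
qed

lemma sort_max: "0 \<le> x \<Longrightarrow> foldl mu_step x xs \<le> foldl mu_step x (srt xs)"
proof (induction xs rule: rev_induct)
  case Nil then show ?case by (simp add: srt_def zeros_def)
next
  case (snoc b xs)
  have nn: "0 \<le> foldl mu_step x xs" using foldl_nonneg snoc.prems by blast
  have "foldl mu_step x (xs @ [b]) = mu_step (foldl mu_step x xs) b" by simp
  also have "\<dots> \<le> mu_step (foldl mu_step x (srt xs)) b"
    using step_mono nn snoc by blast
  also have "\<dots> \<le> foldl mu_step x (srt (xs @ [b]))"
  proof (cases b)
    case True
    have z: "zeros (xs @ [b]) = zeros xs" using True by (simp add: zeros_def)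
    have l: "length (xs @ [b]) - zeros xs = Suc (length xs - zeros xs)" using zeros_le[of xs] by simp
    show ?thesis using True unfolding srt_def z l by (simp add: replicate_app_Cons_same[symmetric] replicate_append_same[symmetric] del: replicate_Suc) (simp add: replicate_append_same[symmetric])
  next
    case False
    have z: "zeros (xs @ [b]) = Suc (zeros xs)" using False by (simp add: zeros_def)
    have l: "length (xs @ [b]) - Suc (zeros xs) = length xs - zeros xs" by simp
    define y where "y = foldl mu_step x (replicate (zeros xs) False)"
    have y0: "0 \<le> y" unfolding y_def using foldl_nonneg snoc.prems by blast
    have "mu_step (foldl mu_step x (srt xs)) b = mu_step (y / 2^(length xs - zeros xs)) False"
      using False by (simp add: srt_def y_def foldl_ones)
    also have "\<dots> \<le> mu_step y False / 2^(length xs - zeros xs)" by (rule swap_ineq[OF y0])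
    also have "\<dots> = foldl mu_step x (srt (xs @ [b]))"
      unfolding srt_def z l by (simp add: y_def foldl_ones replicate_append_same[symmetric])
    finally show ?thesis .
  qed
  finally show ?case .
qed


lemma zeros_app[simp]: "zeros (xs @ ys) = zeros xs + zeros ys"
  by (simp add: zeros_def)
lemma zeros_rep[simp]: "zeros (replicate n b) = (if b then 0 else n)"
  by (simp add: zeros_def)
lemma zeros_Nil[simp]: "zeros [] = 0" by (simp add: zeros_def)
lemma zeros_Cons[simp]: "zeros (b # xs) = (if b then zeros xs else Suc (zeros xs))"
  by (simp add: zeros_def)

lemma node_eq: "node m r xs = (a, c) \<longleftrightarrow> a = int m - int (length xs) \<and> c = int r - int (zeros xs)"
  by (auto simp: node_def)

lemma x0_pos: "0 < eps \<Longrightarrow> eps < 1 \<Longrightarrow> 0 \<le> 1 / eps^2 - (1::real)"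
proof -
  assume a: "0 < eps" "eps < 1"
  have "eps^2 \<le> 1" using a by (simp add: power_le_one)
  then have "1 \<le> 1 / eps^2" using a by (simp add: field_simps)
  then show ?thesis by simp
qed

lemma srt_eq: "zeros xs = a \<Longrightarrow> length xs = a + b \<Longrightarrow> srt xs = replicate a False @ replicate b True"
  by (simp add: srt_def)

theorem lemma8:
  fixes m r :: nat and eps :: real
  assumes "1 \<le> r" and "r < m" and "0 < eps" and "eps < 1"
  shows "(\<forall>g. 1 \<le> g \<and> g \<le> m - r \<longrightarrow>
            xi_star_g m r g \<in> Gamma_g m r g \<and>
            (\<forall>\<xi> \<in> Gamma_g m r g. mu eps \<xi> \<le> mu eps (xi_star_g m r g)))
       \<and> left_end_path m r (xi_star m r)
       \<and> (\<forall>\<xi>. left_end_path m r \<xi> \<longrightarrow> mu eps \<xi> \<le> mu eps (xi_star m r))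
       \<and> (\<forall>\<xi> xs ys h. \<xi> = xs @ ys \<and> end_subpath m r xs \<and> h \<ge> 1 \<and> node m r xs = (int h, int h)
            \<and> length ys = h \<longrightarrow> mu eps xs \<le> mu eps (xi_star m r))"
proof -
  define x0 where "x0 = 1 / eps^2 - (1::real)"
  have x0: "0 \<le> x0" unfolding x0_def using x0_pos assms by blast
  have mu: "\<And>xs. mu eps xs = foldl mu_step x0 xs" by (simp add: mu_def x0_def)
  have A: "xi_star_g m r g \<in> Gamma_g m r g \<and>
            (\<forall>\<xi> \<in> Gamma_g m r g. mu eps \<xi> \<le> mu eps (xi_star_g m r g))"
    if g: "1 \<le> g" "g \<le> m - r" for g
  proof
    define xs where "xs = replicate (r - 1) False @ replicate (m - r - g) True @ [False]"
    have "end_subpath m r xs"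
      unfolding end_subpath_def
    proof
      show "is_end_node (node m r xs)"
        using assms g by (simp add: xs_def node_def is_end_node_def)
      show "\<forall>k<length xs. \<not> is_end_node (node m r (take k xs))"
      proof (intro allI impI)
        fix k assume k: "k < length xs"
        have "take k xs = take k (replicate (r - 1) False @ replicate (m - r - g) True)"
          using k unfolding xs_def by (simp add: take_append)
        then have "zeros (take k xs) = min k (r - 1)"
          by (simp add: take_append min_def)
        then show "\<not> is_end_node (node m r (take k xs))"
          using k assms g by (auto simp: node_def is_end_node_def xs_def min_def split: if_splits)
      qed
    qed
    moreover have "node m r xs = (int g, 0)" using assms g by (simp add: xs_def node_def)
    moreover have "xi_star_g m r g = xs @ replicate g True" by (simp add: xi_star_g_def xs_def)
    ultimately show "xi_star_g m r g \<in> Gamma_g m r g" unfolding Gamma_g_def by blast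
    show "\<forall>\<xi> \<in> Gamma_g m r g. mu eps \<xi> \<le> mu eps (xi_star_g m r g)"
    proof
      fix \<xi> assume "\<xi> \<in> Gamma_g m r g"
      then obtain ys where ys: "\<xi> = ys @ replicate g True" "end_subpath m r ys" "node m r ys = (int g, 0)"
        unfolding Gamma_g_def by blast
      have ne: "ys \<noteq> []" using ys(3) assms by (auto simp: node_def)
      then obtain z b where zb: "ys = z @ [b]" by (metis rev_exhaust)
      have lz: "length z = m - g - 1" "zeros z + (if b then 0 else 1) = r"
        using ys(3) g assms unfolding zb by (auto simp: node_eq split: if_splits)
      have bF: "\<not> b"
      proof
        assume b: b
        have "take (length z) ys = z" by (simp add: zb)
        moreover have "length z < length ys" by (simp add: zb)
        moreover have "is_end_node (node m r z)"
          using lz b assms g by (simp add: node_def is_end_node_def)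
        ultimately show False using ys(2) unfolding end_subpath_def by metis
      qed
      have sz: "srt z = replicate (r - 1) False @ replicate (m - r - g) True"
        using lz bF assms g by (intro srt_eq) auto
      have "mu eps \<xi> = foldl mu_step (mu_step (foldl mu_step x0 z) False) (replicate g True)"
        by (simp add: mu ys(1) zb bF)
      also have "\<dots> \<le> foldl mu_step (mu_step (foldl mu_step x0 (srt z)) False) (replicate g True)"
      proof (rule foldl_mono)
        have n: "0 \<le> foldl mu_step x0 z" using foldl_nonneg x0 by blast
        then show "0 \<le> mu_step (foldl mu_step x0 z) False" by simp
        show "mu_step (foldl mu_step x0 z) False \<le> mu_step (foldl mu_step x0 (srt z)) False"
          using step_mono[OF n sort_max[OF x0]] .
      qed
      also have "\<dots> = mu eps (xi_star_g m r g)"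
        by (simp add: mu sz xi_star_g_def)
      finally show "mu eps \<xi> \<le> mu eps (xi_star_g m r g)" .
    qed
  qed
  have B: "left_end_path m r (xi_star m r)"
  proof -
    define xs where "xs = replicate r False"
    have "end_subpath m r xs"
      unfolding end_subpath_def
      using assms by (auto simp: xs_def node_def is_end_node_def)
    moreover have "node m r xs = (int (m - r), 0)" using assms by (simp add: xs_def node_def)
    moreover have "xi_star m r = xs @ replicate (m - r) True" by (simp add: xi_star_def xs_def)
    moreover have "1 \<le> m - r" using assms by simp
    ultimately show ?thesis unfolding left_end_path_def by blast
  qed
  have srt_star: "srt \<xi> = xi_star m r" if "zeros \<xi> = r" "length \<xi> = m" for \<xi>
    using that assms by (simp add: srt_def xi_star_def)
  have C: "mu eps \<xi> \<le> mu eps (xi_star m r)" if le: "left_end_path m r \<xi>" for \<xi>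
  proof -
    obtain xs g where h: "g \<ge> 1" "node m r xs = (int g, 0)" "\<xi> = xs @ replicate g True"
      using le unfolding left_end_path_def by blast
    have "zeros \<xi> = r" "length \<xi> = m" using h by (auto simp: node_eq)
    then show ?thesis using sort_max[OF x0, of \<xi>] srt_star by (simp add: mu)
  qed
  have D: "mu eps xs \<le> mu eps (xi_star m r)"
    if h: "h \<ge> 1" "node m r xs = (int h, int h)" for xs h
  proof -
    have l: "zeros xs = r - h" "length xs = m - h" "h \<le> r" using h by (auto simp: node_eq)
    have "srt xs = replicate (r - h) False @ replicate (m - r) True"
      using l assms by (intro srt_eq) auto
    then have "mu eps xs \<le> foldl mu_step (foldl mu_step x0 (replicate (r - h) False)) (replicate (m - r) True)"
      using sort_max[OF x0, of xs] by (simp add: mu)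
    also have "\<dots> \<le> foldl mu_step (foldl mu_step (foldl mu_step x0 (replicate (r - h) False)) (replicate h False)) (replicate (m - r) True)"
      by (rule foldl_mono[OF foldl_nonneg[OF x0] foldl_zeros_ge[OF foldl_nonneg[OF x0]]])
    also have "\<dots> = mu eps (xi_star m r)"
      using l by (simp add: mu xi_star_def replicate_add[symmetric] foldl_append[symmetric] del: foldl_append)
    finally show ?thesis .
  qed
  show ?thesis using A B C D by (intro conjI allI impI) (blast, blast, blast, blast, blast)
qed

end
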